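(* Let $A\in \mathrm{GL}_{2g}(\mathbb{Z})$ be a hyperbolic matrix, and let $E^{c},E^{e}\subset\mathbb{R}^{2g}$ be its contracting and expanding subspaces. Let $\Lambda^+,\Lambda^-\subseteq\mathbb{Z}^{2g}$ be sublattices of rank $g$ such that $(\Lambda^+\otimes\mathbb{R})\cap E^c=0$ and $(\Lambda^-\otimes\mathbb{R})\cap E^e=0$. For $N\geq 1$ put $\Lambda_N^{\pm}=A^{\pm N}\Lambda^{\pm}$. Then the cardinality of $\mathbb{Z}^{2g}/(\Lambda_N^+ + \Lambda_N^-)$ grows exponentially with $N$, i.e. there exist constants $C>0$ and $r>1$ such that $\#\big(\mathbb{Z}^{2g}/(\Lambda_N^++\Lambda_N^-)\big)\geq C r^N$ for all $N\geq 1$.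
   Context: A matrix $A\in\mathrm{GL}_{2g}(\mathbb{Z})$ is called hyperbolic if $\mathbb{R}^{2g}$ is the direct sum of a $g$-dimensional contracting subspace $E^c$, spanned by $g$ eigenvectors with eigenvalues of modulus less than $1$, and a complementary $g$-dimensional expanding subspace $E^e$, spanned by $g$ eigenvectors with eigenvalues of modulus greater than $1$. *)

theory Defs
  imports "HOL-Analysis.Analysis"
begin

primrec mpow :: "'a::semiring_1^'n^'n \<Rightarrow> nat \<Rightarrow> 'a^'n^'n" where
  "mpow A 0 = mat 1"
| "mpow A (Suc k) = A ** mpow A k"

definition realv :: "int^'n \<Rightarrow> real^'n" where
  "realv x = (\<chi> i. real_of_int (x $ i))"

definition realm :: "int^'n^'m \<Rightarrow> real^'n^'m" where
  "realm A = (\<chi> i j. real_of_int (A $ i $ j))"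

definition hyperbolic_decomp ::
    "int^'n^'n \<Rightarrow> nat \<Rightarrow> (real^'n) set \<Rightarrow> (real^'n) set \<Rightarrow> bool" where
  "hyperbolic_decomp A g Ec Ee \<longleftrightarrow>
     CARD('n) = 2 * g \<and>
     (\<exists>Bc. finite Bc \<and> card Bc = g \<and> independent Bc \<and> span Bc = Ec \<and>
        (\<forall>v\<in>Bc. \<exists>l::real. realm A *v v = l *\<^sub>R v \<and> \<bar>l\<bar> < 1)) \<and>
     (\<exists>Be. finite Be \<and> card Be = g \<and> independent Be \<and> span Be = Ee \<and>
        (\<forall>v\<in>Be. \<exists>l::real. realm A *v v = l *\<^sub>R v \<and> \<bar>l\<bar> > 1)) \<and>
     Ec \<inter> Ee = {0} \<and> {x + y | x y. x \<in> Ec \<and> y \<in> Ee} = UNIV"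

definition int_sublattice :: "(int^'n) set \<Rightarrow> bool" where
  "int_sublattice L \<longleftrightarrow> 0 \<in> L \<and> (\<forall>x\<in>L. \<forall>y\<in>L. x + y \<in> L) \<and> (\<forall>x\<in>L. - x \<in> L)"

definition lattice_tensor_R :: "(int^'n) set \<Rightarrow> (real^'n) set" where
  "lattice_tensor_R L = span (realv ` L)"

definition lattice_rank :: "(int^'n) set \<Rightarrow> nat" where
  "lattice_rank L = dim (lattice_tensor_R L)"

definition quotient_cosets :: "(int^'n) set \<Rightarrow> (int^'n) set set" where
  "quotient_cosets L = range (\<lambda>x. (\<lambda>l. x + l) ` L)"

end

theory Submission
  imports Defs
begin


lemma realm_mult: "realm (A ** B) = realm A ** realm B"
  by (simp add: realm_def matrix_matrix_mult_def vec_eq_iff)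

lemma realv_mult: "realv (A *v x) = realm A *v realv x"
  by (simp add: realv_def realm_def matrix_vector_mult_def vec_eq_iff)

lemma realm_mat1: "realm (mat 1) = mat 1"
  by (simp add: realm_def mat_def vec_eq_iff)

lemma realv_add: "realv (x + y) = realv x + realv y"
  by (simp add: realv_def vec_eq_iff)

lemma realv_diff: "realv (x - y) = realv x - realv y"
  by (simp add: realv_def vec_eq_iff)

lemma realv_zero: "realv 0 = 0"
  by (simp add: realv_def vec_eq_iff)

lemma realv_eq0: "realv x = 0 \<longleftrightarrow> x = 0"
  by (simp add: realv_def vec_eq_iff)

lemma realm_mpow: "realm (mpow A N) = mpow (realm A) N"
  by (induction N) (simp_all add: realm_mat1 realm_mult)

lemma norm_realv_ge1: assumes "x \<noteq> 0" shows "1 \<le> norm (realv x)"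
proof -
  obtain i where "x $ i \<noteq> 0" using assms by (auto simp: vec_eq_iff)
  then have "1 \<le> \<bar>real_of_int (x $ i)\<bar>" by linarith
  also have "\<dots> = \<bar>realv x $ i\<bar>" by (simp add: realv_def)
  also have "\<dots> \<le> norm (realv x)" by (rule component_le_norm_cart)
  finally show ?thesis .
qed

lemma mpow_eig:
  fixes M :: "real^'n^'n"
  assumes "M *v b = l *\<^sub>R b"
  shows "mpow M N *v b = (l ^ N) *\<^sub>R b"
proof (induction N)
  case 0 then show ?case by simp
next
  case (Suc N)
  have "mpow M (Suc N) *v b = M *v (mpow M N *v b)" by (simp add: matrix_vector_mul_assoc)
  also have "\<dots> = (l ^ Suc N) *\<^sub>R b" using Suc assms
    by (simp add: matrix_vector_mult_scaleR)
  finally show ?case .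
qed

lemma rep_diag:
  fixes f :: "real^'n \<Rightarrow> real^'n"
  assumes B: "independent B" "span B = UNIV" "finite B" and f: "linear f"
    and eig: "\<And>b. b \<in> B \<Longrightarrow> f b = lam b *\<^sub>R b"
  shows "real_vector.representation B (f u) c = lam c * real_vector.representation B u c"
proof -
  let ?R = "real_vector.representation B"
  have "u = (\<Sum>b\<in>B. ?R u b *\<^sub>R b)"
    using real_vector.sum_representation_eq[OF B(1), of u B] B by auto
  then have "f u = (\<Sum>b\<in>B. ?R u b *\<^sub>R f b)"
    by (metis (no_types, lifting) f linear_scale linear_sum sum.cong)
  also have "\<dots> = (\<Sum>b\<in>B. (?R u b * lam b) *\<^sub>R b)"
    by (intro sum.cong) (auto simp: eig)
  finally have fu: "f u = (\<Sum>b\<in>B. (?R u b * lam b) *\<^sub>R b)" .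
  have "?R (f u) c = (\<Sum>b\<in>B. ?R ((?R u b * lam b) *\<^sub>R b) c)"
    unfolding fu using B by (subst real_vector.representation_sum) auto
  also have "\<dots> = (\<Sum>b\<in>B. (?R u b * lam b) * (if c = b then 1 else 0))"
    using B by (intro sum.cong) (auto simp: real_vector.representation_scale real_vector.representation_basis real_vector.span_base)
  also have "\<dots> = (if c \<in> B then ?R u c * lam c else 0)"
    using B by (simp add: if_distrib[of "\<lambda>x. _ * x"] sum.delta' cong: if_cong)
  also have "\<dots> = lam c * ?R u c"
    using real_vector.representation_ne_zero[of B u c] by auto
  finally show ?thesis .
qed



abbreviation Rp where "Rp B u b \<equiv> real_vector.representation B u b"

lemma rep_add:
  fixes B :: "(real^'n) set"
  assumes "independent B" "span B = UNIV"
  shows "Rp B (u + v) b = Rp B u b + Rp B v b"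
  using assms by (simp add: real_vector.representation_add)

lemma coord_upper:
  fixes B :: "(real^'n) set"
  assumes B: "independent B" "span B = UNIV" "finite B"
  shows "\<exists>K>0. \<forall>u. (\<Sum>b\<in>B. \<bar>Rp B u b\<bar>) \<le> K * norm u"
proof -
  have "\<forall>b\<in>B. \<exists>K>0. \<forall>x. norm (Rp B x b) \<le> norm x * K"
  proof
    fix b assume "b \<in> B"
    have "linear (\<lambda>v. Rp B v b)"
      by (rule linearI) (simp_all add: rep_add[OF B(1,2)] real_vector.representation_scale B)
    then have "bounded_linear (\<lambda>v. Rp B v b)" by (simp add: linear_conv_bounded_linear)
    then show "\<exists>K>0. \<forall>x. norm (Rp B x b) \<le> norm x * K" by (rule bounded_linear.pos_bounded)
  qed
  then obtain Kf where Kf: "\<And>b x. b \<in> B \<Longrightarrow> \<bar>Rp B x b\<bar> \<le> norm x * Kf b" "\<And>b. b \<in> B \<Longrightarrow> Kf b > 0"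
    by (metis real_norm_def)
  show ?thesis
  proof (intro exI[of _ "(\<Sum>b\<in>B. Kf b) + 1"] conjI allI)
    show "(\<Sum>b\<in>B. Kf b) + 1 > 0" using Kf(2) by (smt (verit) sum_nonneg)
    fix u
    have "(\<Sum>b\<in>B. \<bar>Rp B u b\<bar>) \<le> (\<Sum>b\<in>B. norm u * Kf b)" by (intro sum_mono Kf(1))
    also have "\<dots> = (\<Sum>b\<in>B. Kf b) * norm u" by (simp add: sum_distrib_left mult.commute)
    also have "\<dots> \<le> ((\<Sum>b\<in>B. Kf b) + 1) * norm u" by (simp add: mult_right_mono)
    finally show "(\<Sum>b\<in>B. \<bar>Rp B u b\<bar>) \<le> ((\<Sum>b\<in>B. Kf b) + 1) * norm u" .
  qed
qed

lemma coord_lower: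
  fixes B :: "(real^'n) set"
  assumes B: "independent B" "span B = UNIV" "finite B"
    and S: "S1 \<union> S2 = B" "S1 \<inter> S2 = {}"
    and P: "subspace P" "P \<inter> span S1 = {0}"
  shows "\<exists>k>0. \<forall>u\<in>P. k * norm u \<le> (\<Sum>b\<in>S2. \<bar>Rp B u b\<bar>)"
proof -
  define pe where "pe u = (\<Sum>b\<in>S2. Rp B u b *\<^sub>R b)" for u
  have fin: "finite S1" "finite S2" using S B(3) by auto
  have lin: "linear pe"
  proof (rule linearI)
    fix x y show "pe (x + y) = pe x + pe y"
      unfolding pe_def by (simp add: rep_add[OF B(1,2)] scaleR_add_left sum.distrib)
  next
    fix c x show "pe (c *\<^sub>R x) = c *\<^sub>R pe x"
      unfolding pe_def using B by (simp add: real_vector.representation_scale scaleR_sum_right)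
  qed
  have bl: "bounded_linear pe" using lin by (simp add: linear_conv_bounded_linear)
  have inj: "\<forall>u\<in>P. pe u = 0 \<longrightarrow> u = 0"
  proof (intro ballI impI)
    fix u assume uP: "u \<in> P" and pu: "pe u = 0"
    have "u = (\<Sum>b\<in>B. Rp B u b *\<^sub>R b)"
      using real_vector.sum_representation_eq[OF B(1), of u B] B by auto
    also have "\<dots> = (\<Sum>b\<in>S1. Rp B u b *\<^sub>R b) + pe u"
      unfolding pe_def S(1)[symmetric] using fin S(2) by (rule sum.union_disjoint)
    finally have "u = (\<Sum>b\<in>S1. Rp B u b *\<^sub>R b)" using pu by simp
    also have "\<dots> \<in> span S1"
      by (intro real_vector.span_sum real_vector.span_scale real_vector.span_base)
    finally show "u = 0" using uP P(2) by blast
  qed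
  obtain k1 where k1: "k1 > 0" "\<And>u. u \<in> P \<Longrightarrow> k1 * norm u \<le> norm (pe u)"
    using injective_imp_isometric[OF closed_subspace[OF P(1)] P(1) bl inj] by blast
  define V where "V = (\<Sum>b\<in>B. norm b) + 1"
  have Vb: "norm b \<le> V" if "b \<in> B" for b
  proof -
    have "norm b \<le> (\<Sum>b\<in>B. norm b)"
      using that B(3) by (intro member_le_sum) auto
    then show ?thesis unfolding V_def by simp
  qed
  have V0: "V > 0" unfolding V_def by (smt (verit) norm_ge_zero sum_nonneg)
  show ?thesis
  proof (intro exI[of _ "k1 / V"] conjI ballI)
    show "k1 / V > 0" using k1 V0 by simp
    fix u assume uP: "u \<in> P"
    have "norm (pe u) \<le> (\<Sum>b\<in>S2. norm (Rp B u b *\<^sub>R b))"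
      unfolding pe_def by (rule norm_sum)
    also have "\<dots> \<le> (\<Sum>b\<in>S2. \<bar>Rp B u b\<bar> * V)"
      using S Vb by (intro sum_mono) (auto intro: mult_left_mono)
    also have "\<dots> = V * (\<Sum>b\<in>S2. \<bar>Rp B u b\<bar>)" by (simp add: sum_distrib_left mult.commute)
    finally have "k1 * norm u \<le> V * (\<Sum>b\<in>S2. \<bar>Rp B u b\<bar>)" using k1(2)[OF uP] by linarith
    then show "k1 / V * norm u \<le> (\<Sum>b\<in>S2. \<bar>Rp B u b\<bar>)"
      using V0 by (simp add: field_simps)
  qed
qed


lemma key_arith:
 fixes t k K na nb nx ea eb eGb eFa ex ca cb cGb cFa cx :: real
 assumes t: "t \<ge> 1" and k: "k > 0" and K: "K > 0" and tk: "t*k \<ge> 2*K"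
  and na: "na \<ge> 0" and nb: "nb \<ge> 0"
  and e1: "ex \<ge> eFa - eGb" and e2: "eFa \<ge> t*ea" and e3: "t*eGb \<le> eb" and e4: "ea \<ge> k*na" and e5: "eb \<le> K*nb"
  and c1: "cx \<ge> cGb - cFa" and c2: "cGb \<ge> t*cb" and c3: "t*cFa \<le> ca" and c4: "cb \<ge> k*nb" and c5: "ca \<le> K*na"
  and x1: "ex \<le> K*nx" and x2: "cx \<le> K*nx" and x3: "nx*(4*K) < t*k"
 shows "na+nb<1"
proof -
  have "t*ex \<ge> t*(eFa - eGb)" using e1 t by (simp add: mult_left_mono)
  then have "t*ex \<ge> t*eFa - t*eGb" by (simp add: right_diff_distrib)
  moreover have "t*eFa \<ge> t*(t*ea)" using e2 t by (simp add: mult_left_mono)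
  moreover have "t*(t*ea) \<ge> t*(t*(k*na))" using e4 t by (simp add: mult_left_mono)
  ultimately have A: "t*ex \<ge> t*t*k*na - K*nb" using e3 e5 by (simp add: algebra_simps)
  have "t*cx \<ge> t*(cGb - cFa)" using c1 t by (simp add: mult_left_mono)
  then have "t*cx \<ge> t*cGb - t*cFa" by (simp add: right_diff_distrib)
  moreover have "t*cGb \<ge> t*(t*cb)" using c2 t by (simp add: mult_left_mono)
  moreover have "t*(t*cb) \<ge> t*(t*(k*nb))" using c4 t by (simp add: mult_left_mono)
  ultimately have B: "t*cx \<ge> t*t*k*nb - K*na" using c3 c5 by (simp add: algebra_simps)
  have "t*ex \<le> t*(K*nx)" "t*cx \<le> t*(K*nx)" using x1 x2 t by (simp_all add: mult_left_mono)
  then have "t*ex + t*cx \<le> 2*t*K*nx" by (simp add: algebra_simps)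
  with A B have C: "(t*t*k - K)*(na+nb) \<le> 2*t*K*nx" by (simp add: algebra_simps)
  have "t*t*k \<ge> t*k" using t k by (simp add: mult_right_mono)
  then have D: "t*t*k - K \<ge> t*t*k/2" using tk by linarith
  have "(t*t*k/2)*(na+nb) \<le> (t*t*k - K)*(na+nb)" using D na nb by (intro mult_right_mono) auto
  also have "\<dots> \<le> 2*t*K*nx" by (rule C)
  also have "\<dots> = (t/2)*(nx*(4*K))" by (simp add: algebra_simps)
  also have "\<dots> < (t/2)*(t*k)" using x3 t by (intro mult_strict_left_mono) auto
  also have "\<dots> = t*t*k/2" by simp
  finally have "(t*t*k/2)*(na+nb) < (t*t*k/2)*1" by simp
  moreover have "t*t*k/2 > 0" using t k by simp
  ultimately show ?thesis by (simp only: mult_less_cancel_left_pos)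
qed


lemma norm_axis_real: "norm (axis i (c::real)) = \<bar>c\<bar>"
proof -
  have "axis i c = c *\<^sub>R axis i 1" by (simp add: axis_def vec_eq_iff)
  then show ?thesis by simp
qed

theorem lemma2p1:
  fixes A :: "int^'n^'n" and g :: nat
    and Ec Ee :: "(real^'n) set"
    and Lp Lm :: "(int^'n) set"
  assumes "invertible A"
    and "hyperbolic_decomp A g Ec Ee"
    and "int_sublattice Lp" and "lattice_rank Lp = g"
    and "int_sublattice Lm" and "lattice_rank Lm = g"
    and "lattice_tensor_R Lp \<inter> Ec = {0}"
    and "lattice_tensor_R Lm \<inter> Ee = {0}"
  shows "\<exists>C::real. C > 0 \<and> (\<exists>r::real. r > 1 \<and>
           (\<forall>N::nat. N \<ge> 1 \<longrightarrow>
              (let LpN = (\<lambda>x. mpow A N *v x) ` Lp;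
                   LmN = (\<lambda>x. mpow (matrix_inv A) N *v x) ` Lm;
                   Q = quotient_cosets {x + y | x y. x \<in> LpN \<and> y \<in> LmN}
               in infinite Q \<or> C * r ^ N \<le> real (card Q))))"
proof -
  obtain Bc where Bc: "finite Bc" "card Bc = g" "independent Bc" "span Bc = Ec"
     "\<And>v. v \<in> Bc \<Longrightarrow> \<exists>l::real. realm A *v v = l *\<^sub>R v \<and> \<bar>l\<bar> < 1"
    using assms(2) unfolding hyperbolic_decomp_def by blast
  obtain Be where Be: "finite Be" "card Be = g" "independent Be" "span Be = Ee"
     "\<And>v. v \<in> Be \<Longrightarrow> \<exists>l::real. realm A *v v = l *\<^sub>R v \<and> \<bar>l\<bar> > 1"
    using assms(2) unfolding hyperbolic_decomp_def by blast
  have card_n: "CARD('n) = 2 * g" and sumUNIV: "{x + y | x y. x \<in> Ec \<and> y \<in> Ee} = UNIV"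
    using assms(2) unfolding hyperbolic_decomp_def by blast+
  define B where "B = Bc \<union> Be"
  have finB: "finite B" using Bc Be B_def by simp
  have spanB: "span B = UNIV"
  proof -
    have "x \<in> span B" for x
    proof -
      obtain y z where "x = y + z" "y \<in> Ec" "z \<in> Ee" using sumUNIV by blast
      moreover have "Ec \<subseteq> span B" "Ee \<subseteq> span B"
        unfolding B_def Bc(4)[symmetric] Be(4)[symmetric] by (auto intro: real_vector.span_mono[THEN subsetD])
      ultimately show ?thesis by (auto intro: real_vector.span_add)
    qed
    then show ?thesis by auto
  qed
  have indB: "independent B"
  proof (rule eucl.card_le_dim_spanning[of B UNIV])
    show "card B \<le> dim (UNIV :: (real^'n) set)"
      using card_n Bc(2) Be(2) card_Un_le[of Bc Be] unfolding B_def by simp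
  qed (auto simp: spanB finB)

  have nzc: "0 \<notin> Bc" using Bc(3) real_vector.dependent_zero by blast
  have nze: "0 \<notin> Be" using Be(3) real_vector.dependent_zero by blast
  define fA where "fA = realm A"
  define fI where "fI = realm (matrix_inv A)"
  have inv: "A ** matrix_inv A = mat 1 \<and> matrix_inv A ** A = mat 1"
    using assms(1) unfolding invertible_def matrix_inv_def by (rule someI_ex)
  have fAI: "fA ** fI = mat 1" "fI ** fA = mat 1"
    using inv unfolding fA_def fI_def by (metis realm_mult realm_mat1)+
  define lam where "lam b = (if b \<in> Bc then (SOME l. fA *v b = l *\<^sub>R b \<and> \<bar>l\<bar> < 1)
     else (SOME l. fA *v b = l *\<^sub>R b \<and> \<bar>l\<bar> > 1))" for b
  have lamc: "fA *v b = lam b *\<^sub>R b \<and> \<bar>lam b\<bar> < 1" if "b \<in> Bc" for b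
    using someI_ex[OF Bc(5)[OF that]] that unfolding lam_def fA_def by simp
  have disj: "Bc \<inter> Be = {}"
  proof (rule ccontr)
    assume "Bc \<inter> Be \<noteq> {}"
    then obtain b where b: "b \<in> Bc" "b \<in> Be" by blast
    obtain l where l: "fA *v b = l *\<^sub>R b" "\<bar>l\<bar> > 1" using Be(5)[OF b(2)] unfolding fA_def by blast
    have "lam b *\<^sub>R b = l *\<^sub>R b" using lamc[OF b(1)] l by auto
    moreover have "b \<noteq> 0" using b nzc by auto
    ultimately have "lam b = l" by simp
    then show False using lamc[OF b(1)] l by simp
  qed
  have lame: "fA *v b = lam b *\<^sub>R b \<and> \<bar>lam b\<bar> > 1" if "b \<in> Be" for b
  proof -
    have "b \<notin> Bc" using disj that by blast
    then show ?thesis using someI_ex[OF Be(5)[OF that]] unfolding lam_def fA_def by simp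
  qed
  have eig: "fA *v b = lam b *\<^sub>R b" if "b \<in> B" for b
    using that lamc lame unfolding B_def by blast
  have lam_nz: "lam b \<noteq> 0" if "b \<in> B" for b
  proof
    assume "lam b = 0"
    then have "fA *v b = 0" using eig[OF that] by simp
    then have "fI *v (fA *v b) = 0" by simp
    then have "b = 0" by (simp add: matrix_vector_mul_assoc fAI)
    then show False using that nzc nze unfolding B_def by blast
  qed
  have eigI: "fI *v b = (1 / lam b) *\<^sub>R b" if "b \<in> B" for b
  proof -
    have "b = fI *v (fA *v b)" by (simp add: matrix_vector_mul_assoc fAI)
    also have "\<dots> = lam b *\<^sub>R (fI *v b)" by (simp add: eig[OF that] matrix_vector_mult_scaleR)
    finally have "b = lam b *\<^sub>R (fI *v b)" .
    then have "(1 / lam b) *\<^sub>R b = (1 / lam b) *\<^sub>R (lam b *\<^sub>R (fI *v b))" by simp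
    also have "\<dots> = fI *v b" using lam_nz[OF that] by simp
    finally have "(1 / lam b) *\<^sub>R b = fI *v b" .
    then show ?thesis by simp
  qed
  have coordF: "Rp B (mpow fA N *v u) b = lam b ^ N * Rp B u b" for N u b
    by (rule rep_diag[OF indB spanB finB]) (auto intro: mpow_eig eig)
  have coordG: "Rp B (mpow fI N *v u) b = (1 / lam b) ^ N * Rp B u b" for N u b
    by (rule rep_diag[OF indB spanB finB]) (auto intro: mpow_eig eigI)
  define \<rho> where "\<rho> = Min (insert 2 ((\<lambda>b. \<bar>lam b\<bar>) ` Be \<union> (\<lambda>b. 1 / \<bar>lam b\<bar>) ` Bc))"
  have fin\<rho>: "finite (insert 2 ((\<lambda>b. \<bar>lam b\<bar>) ` Be \<union> (\<lambda>b. 1 / \<bar>lam b\<bar>) ` Bc))"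
    using Bc(1) Be(1) by simp
  have \<rho>1: "\<rho> > 1"
    unfolding \<rho>_def
  proof (subst Min_gr_iff[OF fin\<rho>], simp, intro ballI)
    fix a assume "a \<in> insert 2 ((\<lambda>b. \<bar>lam b\<bar>) ` Be \<union> (\<lambda>b. 1 / \<bar>lam b\<bar>) ` Bc)"
    then consider "a = 2" | b where "b \<in> Be" "a = \<bar>lam b\<bar>" | b where "b \<in> Bc" "a = 1 / \<bar>lam b\<bar>" by blast
    then show "1 < a"
    proof cases
      case 1 then show ?thesis by simp
    next
      case 2 then show ?thesis using lame by auto
    next
      case 3
      then have "b \<in> B" unfolding B_def by blast
      then have "0 < \<bar>lam b\<bar>" using lam_nz by simp
      then show ?thesis using lamc[OF 3(1)] 3(2) by simp
    qed
  qed
  have \<rho>e: "\<rho> \<le> \<bar>lam b\<bar>" if "b \<in> Be" for b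
    unfolding \<rho>_def using that fin\<rho> by (intro Min_le) auto
  have \<rho>c: "\<rho> \<le> 1 / \<bar>lam b\<bar>" if "b \<in> Bc" for b
    unfolding \<rho>_def using that fin\<rho> by (intro Min_le) auto

  have \<rho>0: "\<rho> > 0" using \<rho>1 by simp
  define e where "e u = (\<Sum>b\<in>Be. \<bar>Rp B u b\<bar>)" for u
  define c where "c u = (\<Sum>b\<in>Bc. \<bar>Rp B u b\<bar>)" for u
  have eF: "\<rho> ^ N * e u \<le> e (mpow fA N *v u)" for N u
  proof -
    have "\<rho> ^ N * e u = (\<Sum>b\<in>Be. \<rho> ^ N * \<bar>Rp B u b\<bar>)" unfolding e_def by (simp add: sum_distrib_left)
    also have "\<dots> \<le> (\<Sum>b\<in>Be. \<bar>lam b\<bar> ^ N * \<bar>Rp B u b\<bar>)"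
      using \<rho>e \<rho>0 by (intro sum_mono mult_right_mono power_mono) auto
    also have "\<dots> = e (mpow fA N *v u)" unfolding e_def coordF by (simp add: abs_mult power_abs)
    finally show ?thesis .
  qed
  have cG: "\<rho> ^ N * c u \<le> c (mpow fI N *v u)" for N u
  proof -
    have "\<rho> ^ N * c u = (\<Sum>b\<in>Bc. \<rho> ^ N * \<bar>Rp B u b\<bar>)" unfolding c_def by (simp add: sum_distrib_left)
    also have "\<dots> \<le> (\<Sum>b\<in>Bc. \<bar>1 / lam b\<bar> ^ N * \<bar>Rp B u b\<bar>)"
      using \<rho>c \<rho>0 by (intro sum_mono mult_right_mono power_mono) auto
    also have "\<dots> = c (mpow fI N *v u)" unfolding c_def coordG by (simp add: abs_mult power_abs)
    finally show ?thesis .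
  qed
  have eG: "\<rho> ^ N * e (mpow fI N *v u) \<le> e u" for N u
  proof -
    have "\<rho> ^ N * e (mpow fI N *v u) = (\<Sum>b\<in>Be. (\<rho> / \<bar>lam b\<bar>) ^ N * \<bar>Rp B u b\<bar>)"
      unfolding e_def coordG by (simp add: sum_distrib_left abs_mult power_abs power_divide)
    also have "\<dots> \<le> (\<Sum>b\<in>Be. 1 * \<bar>Rp B u b\<bar>)"
    proof (intro sum_mono mult_right_mono power_le_one)
      fix b assume b: "b \<in> Be"
      then have "\<bar>lam b\<bar> > 0" using lame by force
      then show "\<rho> / \<bar>lam b\<bar> \<le> 1" "0 \<le> \<rho> / \<bar>lam b\<bar>" using \<rho>e[OF b] \<rho>0 by auto
    qed auto
    also have "\<dots> = e u" unfolding e_def by simp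
    finally show ?thesis .
  qed
  have cF: "\<rho> ^ N * c (mpow fA N *v u) \<le> c u" for N u
  proof -
    have "\<rho> ^ N * c (mpow fA N *v u) = (\<Sum>b\<in>Bc. (\<rho> * \<bar>lam b\<bar>) ^ N * \<bar>Rp B u b\<bar>)"
      unfolding c_def coordF by (simp add: sum_distrib_left abs_mult power_abs power_mult_distrib mult.assoc)
    also have "\<dots> \<le> (\<Sum>b\<in>Bc. 1 * \<bar>Rp B u b\<bar>)"
    proof (intro sum_mono mult_right_mono power_le_one)
      fix b assume b: "b \<in> Bc"
      then have "b \<in> B" unfolding B_def by blast
      then have "\<bar>lam b\<bar> > 0" using lam_nz by simp
      then show "\<rho> * \<bar>lam b\<bar> \<le> 1" "0 \<le> \<rho> * \<bar>lam b\<bar>" using \<rho>c[OF b] \<rho>0 by (auto simp: field_simps)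
    qed auto
    also have "\<dots> = c u" unfolding c_def by simp
    finally show ?thesis .
  qed
  have e_add: "e (u + v) \<ge> e u - e v" for u v
  proof -
    have "e u - e v = (\<Sum>b\<in>Be. \<bar>Rp B u b\<bar> - \<bar>Rp B v b\<bar>)" unfolding e_def by (simp add: sum_subtractf)
    also have "\<dots> \<le> e (u + v)" unfolding e_def rep_add[OF indB spanB] by (intro sum_mono) linarith
    finally show ?thesis .
  qed
  have c_add: "c (u + v) \<ge> c v - c u" for u v
  proof -
    have "c v - c u = (\<Sum>b\<in>Bc. \<bar>Rp B v b\<bar> - \<bar>Rp B u b\<bar>)" unfolding c_def by (simp add: sum_subtractf)
    also have "\<dots> \<le> c (u + v)" unfolding c_def rep_add[OF indB spanB] by (intro sum_mono) linarith
    finally show ?thesis .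
  qed
  obtain K where K: "K > 0" "\<And>u. (\<Sum>b\<in>B. \<bar>Rp B u b\<bar>) \<le> K * norm u"
    using coord_upper[OF indB spanB finB] by blast
  have eK: "e u \<le> K * norm u" for u
  proof -
    have "e u \<le> (\<Sum>b\<in>B. \<bar>Rp B u b\<bar>)" unfolding e_def B_def using finB B_def
      by (intro sum_mono2) auto
    then show ?thesis using K(2)[of u] by linarith
  qed
  have cK: "c u \<le> K * norm u" for u
  proof -
    have "c u \<le> (\<Sum>b\<in>B. \<bar>Rp B u b\<bar>)" unfolding c_def B_def using finB B_def
      by (intro sum_mono2) auto
    then show ?thesis using K(2)[of u] by linarith
  qed
  define P where "P = lattice_tensor_R Lp"
  define M where "M = lattice_tensor_R Lm"
  obtain k1 where k1: "k1 > 0" "\<And>u. u \<in> P \<Longrightarrow> k1 * norm u \<le> e u"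
    using coord_lower[OF indB spanB finB, of Bc Be P] B_def disj assms(7) Bc(4)
    unfolding P_def e_def lattice_tensor_R_def by (auto simp: real_vector.subspace_span)
  obtain k2 where k2: "k2 > 0" "\<And>u. u \<in> M \<Longrightarrow> k2 * norm u \<le> c u"
    using coord_lower[OF indB spanB finB, of Be Bc M] B_def disj assms(8) Be(4)
    unfolding M_def c_def lattice_tensor_R_def by (auto simp: real_vector.subspace_span Un_commute Int_commute)
  define k where "k = min k1 k2"
  have k0: "k > 0" using k1 k2 k_def by simp
  have kP: "k * norm u \<le> e u" if "u \<in> P" for u
    using k1(2)[OF that] k_def by (smt (verit) mult_right_mono norm_ge_zero)
  have kM: "k * norm u \<le> c u" if "u \<in> M" for u
    using k2(2)[OF that] k_def by (smt (verit) mult_right_mono norm_ge_zero)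

  obtain N0 where N0: "2 * K / k < \<rho> ^ N0" using real_arch_pow[OF \<rho>1] by blast
  define C where "C = min (k / (4 * K)) (1 / \<rho> ^ N0)"
  have C0: "C > 0" unfolding C_def using k0 K \<rho>0 by simp
  have main: "let LpN = (\<lambda>x. mpow A N *v x) ` Lp;
                   LmN = (\<lambda>x. mpow (matrix_inv A) N *v x) ` Lm;
                   Q = quotient_cosets {x + y | x y. x \<in> LpN \<and> y \<in> LmN}
               in infinite Q \<or> C * \<rho> ^ N \<le> real (card Q)" for N
  proof -
    define H where "H = {x + y | x y. x \<in> (\<lambda>x. mpow A N *v x) ` Lp \<and> y \<in> (\<lambda>x. mpow (matrix_inv A) N *v x) ` Lm}"
    define Q where "Q = quotient_cosets H"
    have "infinite Q \<or> C * \<rho> ^ N \<le> real (card Q)"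
    proof (cases "finite Q")
      case False then show ?thesis by simp
    next
      case finQ: True
      have Qne: "Q \<noteq> {}" unfolding Q_def quotient_cosets_def by simp
      then have cQ1: "1 \<le> card Q" using finQ by (simp add: Suc_le_eq card_gt_0_iff)
      show ?thesis
      proof (cases "N < N0")
        case True
        have "\<rho> ^ N \<le> \<rho> ^ N0" using True \<rho>1 by (intro power_increasing) auto
        then have "(1 / \<rho> ^ N0) * \<rho> ^ N \<le> 1" using \<rho>0 by simp
        moreover have "C * \<rho> ^ N \<le> (1 / \<rho> ^ N0) * \<rho> ^ N" unfolding C_def using \<rho>0
          by (intro mult_right_mono) auto
        ultimately show ?thesis using cQ1 by linarith
      next
        case False
        define t where "t = \<rho> ^ N"
        have tN0: "\<rho> ^ N0 \<le> t" unfolding t_def using False \<rho>1 by (intro power_increasing) auto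
        have t1: "t \<ge> 1" unfolding t_def using \<rho>1 by simp
        have "2 * K < \<rho> ^ N0 * k" using N0 k0 by (simp add: pos_divide_less_eq)
        then have tk: "t * k \<ge> 2 * K" using mult_right_mono[OF tN0, of k] k0 by linarith
        define \<delta> where "\<delta> = t * k / (4 * K)"
        have \<delta>0: "\<delta> > 0" unfolding \<delta>_def using t1 k0 K by simp
        define Mn where "Mn = nat \<lceil>\<delta>\<rceil>"
        have Mn1: "real Mn < \<delta> + 1" "\<delta> \<le> real Mn"
          using ceiling_correct[of \<delta>] \<delta>0 unfolding Mn_def by auto
        define i0 :: 'n where "i0 = undefined"
        define w where "w j = axis i0 (int j)" for j
        define cos where "cos j = (\<lambda>l. w j + l) ` H" for j
        have H0: "0 \<in> H" unfolding H_def using assms(3,5) unfolding int_sublattice_def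
          by (auto intro!: exI[of _ 0] image_eqI[of 0])
        have injc: "inj_on cos {..<Mn}"
        proof (rule inj_onI)
          fix j1 j2 assume j1: "j1 \<in> {..<Mn}" and j2: "j2 \<in> {..<Mn}" and eq: "cos j1 = cos j2"
          have "w j1 \<in> cos j1" unfolding cos_def using H0 by force
          then have "w j1 \<in> cos j2" using eq by simp
          then obtain h where hH: "h \<in> H" and wh: "w j1 = w j2 + h" unfolding cos_def by blast
          obtain a b where a: "a \<in> Lp" and b: "b \<in> Lm"
            and hab: "h = mpow A N *v a + mpow (matrix_inv A) N *v b"
            using hH unfolding H_def by blast
          define x where "x = realv h"
          have xab: "x = mpow fA N *v realv a + mpow fI N *v realv b"
            unfolding x_def hab fA_def fI_def by (simp add: realv_add realv_mult realm_mpow)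
          have "h = w j1 - w j2" using wh by simp
          then have "x = axis i0 (real j1 - real j2)"
            unfolding x_def w_def by (simp add: realv_def axis_def vec_eq_iff)
          then have nx: "norm x = \<bar>real j1 - real j2\<bar>" by (simp add: norm_axis_real)
          also have "\<dots> < \<delta>" using j1 j2 Mn1 by auto
          finally have nx\<delta>: "norm x < \<delta>" .
          have aP: "realv a \<in> P" unfolding P_def lattice_tensor_R_def using a
            by (intro real_vector.span_base) auto
          have bM: "realv b \<in> M" unfolding M_def lattice_tensor_R_def using b
            by (intro real_vector.span_base) auto
          have "norm (realv a) + norm (realv b) < 1"
          proof (rule key_arith[OF t1 k0 K(1) tk norm_ge_zero norm_ge_zero])
            show "e x \<ge> e (mpow fA N *v realv a) - e (mpow fI N *v realv b)" unfolding xab by (rule e_add)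
            show "e (mpow fA N *v realv a) \<ge> t * e (realv a)" unfolding t_def by (rule eF)
            show "t * e (mpow fI N *v realv b) \<le> e (realv b)" unfolding t_def by (rule eG)
            show "e (realv a) \<ge> k * norm (realv a)" by (rule kP[OF aP])
            show "e (realv b) \<le> K * norm (realv b)" by (rule eK)
            show "c x \<ge> c (mpow fI N *v realv b) - c (mpow fA N *v realv a)" unfolding xab by (rule c_add)
            show "c (mpow fI N *v realv b) \<ge> t * c (realv b)" unfolding t_def by (rule cG)
            show "t * c (mpow fA N *v realv a) \<le> c (realv a)" unfolding t_def by (rule cF)
            show "c (realv b) \<ge> k * norm (realv b)" by (rule kM[OF bM])
            show "c (realv a) \<le> K * norm (realv a)" by (rule cK)
            show "e x \<le> K * norm x" by (rule eK)
            show "c x \<le> K * norm x" by (rule cK)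
            show "norm x * (4 * K) < t * k" using nx\<delta> K(1) unfolding \<delta>_def by (simp add: pos_less_divide_eq)
          qed
          then have na: "norm (realv a) < 1" and nb: "norm (realv b) < 1"
            using norm_ge_zero[of "realv a"] norm_ge_zero[of "realv b"] by linarith+
          have "a = 0" using norm_realv_ge1[of a] na by (metis not_less)
          moreover have "b = 0" using norm_realv_ge1[of b] nb by (metis not_less)
          ultimately have "h = 0" using hab by simp
          then have "w j1 = w j2" using wh by simp
          then have "w j1 $ i0 = w j2 $ i0" by simp
          then show "j1 = j2" unfolding w_def by (simp add: axis_def)
        qed
        have "cos ` {..<Mn} \<subseteq> Q" unfolding Q_def quotient_cosets_def cos_def by auto
        then have "card (cos ` {..<Mn}) \<le> card Q" using finQ by (rule card_mono[rotated])
        then have "Mn \<le> card Q" using card_image[OF injc] by simp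
        then have "\<delta> \<le> real (card Q)" using Mn1 by linarith
        moreover have "C * \<rho> ^ N \<le> \<delta>" unfolding \<delta>_def t_def[symmetric] C_def using t1
          by (smt (verit, ccfv_SIG) divide_le_cancel mult.commute mult_right_mono times_divide_eq_right min.cobounded1)
        ultimately show ?thesis by linarith
      qed
    qed
    then show ?thesis
      unfolding Let_def Q_def H_def .
  qed
  show ?thesis using C0 \<rho>1 main by blast
qed

end
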